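(* Define $\mathrm{TS}:Q\to\mathbb{R}$ by $\mathrm{TS}(q)=\int_{p(q)/q}^{1}(vq-c)f(v)\,dv$. Then $\mathrm{TS}$ is convex on $Q$ if and only if \[ r(v)r''(v)+r'(v)\le 1+(1-r'(v))^2 \quad\text{for all } v\in\big(\overline p(q_h),\overline p(q_\ell)\big). \]
   Context: Let $0<q_\ell<q_h<\infty$, $Q=[q_\ell,q_h]$, and let $c$ be a real number with $0<c<q_\ell$. Let $F$ be a probability distribution on $[0,1]$ with support $[0,1]$ admitting a twice continuously differentiable density $f:(0,1)\to\mathbb{R}_{>0}$. Define $r(v)=(1-F(v))/f(v)$ and $\psi(v)=v-r(v)$ on $(0,1)$, and assume $\psi'(v)>0$ whenever $\psi(v)>0$. For $q\in Q$, $p(q)$ is the unique maximizer over $p\in\mathbb{R}$ of $(p-c)\big(1-F(p/q)\big)$, and $\overline p(q)=p(q)/q$. *)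

theory Defs
  imports "HOL-Analysis.Analysis"
begin

definition inv_hazard :: "(real \<Rightarrow> real) \<Rightarrow> (real \<Rightarrow> real) \<Rightarrow> real \<Rightarrow> real" where
  "inv_hazard F f v = (1 - F v) / f v"

definition virt_val :: "(real \<Rightarrow> real) \<Rightarrow> (real \<Rightarrow> real) \<Rightarrow> real \<Rightarrow> real" where
  "virt_val F f v = v - inv_hazard F f v"

definition opt_price :: "(real \<Rightarrow> real) \<Rightarrow> real \<Rightarrow> real \<Rightarrow> real" where
  "opt_price F c q = (THE p. \<forall>p'::real. (p' - c) * (1 - F (p' / q)) \<le> (p - c) * (1 - F (p / q)))"

definition opt_price_bar :: "(real \<Rightarrow> real) \<Rightarrow> real \<Rightarrow> real \<Rightarrow> real" where
  "opt_price_bar F c q = opt_price F c q / q"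

definition total_surplus :: "(real \<Rightarrow> real) \<Rightarrow> (real \<Rightarrow> real) \<Rightarrow> real \<Rightarrow> real \<Rightarrow> real" where
  "total_surplus F f c q = integral {opt_price_bar F c q..1} (\<lambda>v. (v * q - c) * f v)"

end

theory Submission
  imports Defs
begin

locale tsloc =
  fixes F f f1 f2 :: "real \<Rightarrow> real" and c :: real
  assumes c_pos: "0 < c"
    and F_cont: "continuous_on UNIV F"
    and F_low: "\<And>v. v \<le> 0 \<Longrightarrow> F v = 0"
    and F_high: "\<And>v. 1 \<le> v \<Longrightarrow> F v = 1"
    and F_dens: "\<And>v. v \<in> {0<..<1} \<Longrightarrow> (F has_real_derivative f v) (at v)"
    and f_pos: "\<And>v. v \<in> {0<..<1} \<Longrightarrow> f v > 0"
    and f1: "\<And>v. v \<in> {0<..<1} \<Longrightarrow> (f has_real_derivative f1 v) (at v)"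
    and f2: "\<And>v. v \<in> {0<..<1} \<Longrightarrow> (f1 has_real_derivative f2 v) (at v)"
    and psi_mono: "\<And>v. v \<in> {0<..<1} \<Longrightarrow> virt_val F f v > 0 \<Longrightarrow> deriv (virt_val F f) v > 0"
begin

definition "G v = 1 - F v"
definition "r = inv_hazard F f"
definition "r1 v = -1 - r v * f1 v / f v"
definition "r2 v = deriv r1 v"
definition "psi = virt_val F f"

lemma F_isCont: "isCont F x"
  using F_cont by (simp add: continuous_on_eq_continuous_at)

lemma F_der_pos: "0 < v \<Longrightarrow> v < 1 \<Longrightarrow> \<exists>y. (F has_real_derivative y) (at v) \<and> y > 0"
  using F_dens f_pos by auto

lemma F_lt1: assumes "v < 1" shows "F v < 1"
proof (cases "v \<le> 0")
  case True then show ?thesis using F_low by simp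
next
  case False
  have "F v < F 1"
    using False assms
    by (intro DERIV_pos_imp_increasing_open[of v 1 F]) (auto intro!: F_der_pos continuous_at_imp_continuous_on F_isCont)
  then show ?thesis using F_high by simp
qed

lemma F_le1: "F v \<le> 1"
  using F_lt1[of v] F_high[of v] by force

lemma F_ge0: "F v \<ge> 0"
proof (cases "v \<le> 0")
  case True then show ?thesis using F_low by simp
next
  case False
  show ?thesis
  proof (cases "v \<ge> 1")
    case True then show ?thesis using F_high by simp
  next
    case False2: False
    have "F 0 < F v"
      using False False2
      by (intro DERIV_pos_imp_increasing_open[of 0 v F]) (auto intro!: F_der_pos continuous_at_imp_continuous_on F_isCont)
    then show ?thesis using F_low[of 0] by simp
  qed
qed

lemma G_pos: "v < 1 \<Longrightarrow> G v > 0"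
  using F_lt1 by (simp add: G_def)

lemma r_pos: "v \<in> {0<..<1} \<Longrightarrow> r v > 0"
  using G_pos f_pos by (simp add: r_def inv_hazard_def G_def)

lemma G_eq: "v \<in> {0<..<1} \<Longrightarrow> G v = f v * r v"
  using f_pos[of v] by (simp add: r_def inv_hazard_def G_def)

lemma G_deriv: "v \<in> {0<..<1} \<Longrightarrow> (G has_real_derivative - f v) (at v)"
  unfolding G_def[abs_def] by (auto intro!: derivative_eq_intros F_dens)

lemma r_deriv: assumes "v \<in> {0<..<1}" shows "(r has_real_derivative r1 v) (at v)"
proof -
  have "((\<lambda>v. (1 - F v) / f v) has_real_derivative
      ((- f v) * f v - (1 - F v) * f1 v) / (f v * f v)) (at v)"
    using assms f_pos[OF assms]
    by (auto intro!: derivative_eq_intros F_dens f1 simp: power2_eq_square)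
  moreover have "((- f v) * f v - (1 - F v) * f1 v) / (f v * f v) = r1 v"
    using f_pos[OF assms] by (simp add: r1_def r_def inv_hazard_def field_simps)
  ultimately show ?thesis by (simp add: r_def inv_hazard_def[abs_def])
qed

lemma f_isCont: "v \<in> {0<..<1} \<Longrightarrow> isCont f v"
  using f1 DERIV_isCont by blast

lemma r1_deriv: assumes "v \<in> {0<..<1}" shows "(r1 has_real_derivative r2 v) (at v)"
proof -
  have "((\<lambda>v. -1 - r v * f1 v / f v) has_real_derivative
     (0 - ((r1 v * f1 v + r v * f2 v) * f v - r v * f1 v * f1 v) / (f v * f v))) (at v)"
    using assms f_pos[OF assms]
    by (auto intro!: derivative_eq_intros r_deriv f1 f2 simp: power2_eq_square)
  then have "r1 differentiable (at v)"
    unfolding r1_def[abs_def] by (auto simp: real_differentiable_def)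
  then show ?thesis unfolding r2_def by (simp add: DERIV_deriv_iff_real_differentiable)
qed

lemma deriv_r: "v \<in> {0<..<1} \<Longrightarrow> deriv r v = r1 v"
  using r_deriv DERIV_imp_deriv by blast

lemma deriv_deriv_r: assumes "v \<in> {0<..<1}" shows "deriv (deriv r) v = r2 v"
proof -
  have "(deriv r has_real_derivative r2 v) (at v)"
    by (rule has_field_derivative_transform_within_open[OF r1_deriv[OF assms], of "{0<..<1}"])
       (use assms deriv_r in auto)
  then show ?thesis using DERIV_imp_deriv by blast
qed

lemma psi_eq: "psi v = v - r v"
  by (simp add: psi_def virt_val_def r_def)

lemma psi_deriv: "v \<in> {0<..<1} \<Longrightarrow> (psi has_real_derivative 1 - r1 v) (at v)"
  unfolding psi_eq[abs_def] by (auto intro!: derivative_eq_intros r_deriv)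

lemma psi'_pos: "v \<in> {0<..<1} \<Longrightarrow> psi v > 0 \<Longrightarrow> 1 - r1 v > 0"
  using psi_mono[of v] psi_deriv[of v] DERIV_imp_deriv by (fastforce simp: psi_def)

lemma psi_lt1: "v \<in> {0<..<1} \<Longrightarrow> psi v < 1"
  using r_pos[of v] by (simp add: psi_eq)

lemma psi_isCont: "v \<in> {0<..<1} \<Longrightarrow> isCont psi v"
  using psi_deriv DERIV_isCont by blast

lemma psi_mono_lemma:
  assumes ab: "a < b" "0 < a" "b < 1" and pa: "psi a > 0"
  shows "psi a < psi b"
proof (rule ccontr)
  assume nb: "\<not> psi a < psi b"
  have a01: "a \<in> {0<..<1}" using ab by auto
  obtain d where d: "d > 0" "\<And>h. h > 0 \<Longrightarrow> h < d \<Longrightarrow> psi a < psi (a + h)"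
    using DERIV_pos_inc_right[OF psi_deriv[OF a01] psi'_pos[OF a01 pa]] by blast
  define x where "x = a + min d (b - a) / 2"
  have m: "min d (b - a) / 2 < b - a" "min d (b - a) / 2 < d" "0 < min d (b - a) / 2"
    using ab d(1) by (auto simp: min_def)
  have x: "a < x" "x < b" "psi a < psi x"
    using m d(2)[of "min d (b - a) / 2"] unfolding x_def by auto
  have cont: "continuous_on {a..b} psi"
    using ab by (intro continuous_at_imp_continuous_on ballI psi_isCont) auto
  have "\<exists>x\<in>{a..b}. \<forall>y\<in>{a..b}. psi y \<le> psi x"
    by (rule continuous_attains_sup[OF compact_Icc _ cont]) (use ab in auto)
  then obtain u where u: "u \<in> {a..b}" "\<And>y. y \<in> {a..b} \<Longrightarrow> psi y \<le> psi u"
    by blast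
  have "psi x \<le> psi u" using u x by auto
  then have "u \<noteq> a" "u \<noteq> b" using x nb by auto
  then have uab: "a < u" "u < b" using u(1) by auto
  have u01: "u \<in> {0<..<1}" using uab ab by auto
  have pu: "psi u > 0" using \<open>psi x \<le> psi u\<close> x pa by linarith
  have "1 - r1 u = 0"
  proof (rule DERIV_local_max[OF psi_deriv[OF u01], of "min (u - a) (b - u)"])
    show "0 < min (u - a) (b - u)" using uab by auto
    show "\<forall>y. \<bar>u - y\<bar> < min (u - a) (b - u) \<longrightarrow> psi y \<le> psi u"
    proof (intro allI impI)
      fix y assume "\<bar>u - y\<bar> < min (u - a) (b - u)"
      then have "y \<in> {a..b}" by (auto simp: abs_if split: if_splits)
      then show "psi y \<le> psi u" using u(2) by auto
    qed
  qed
  then show False using psi'_pos[OF u01 pu] by simp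
qed

lemma psi_inj:
  assumes "v1 \<in> {0<..<1}" "v2 \<in> {0<..<1}" "psi v1 = psi v2" "psi v1 > 0"
  shows "v1 = v2"
proof (cases v1 v2 rule: linorder_cases)
  case less then show ?thesis using psi_mono_lemma[of v1 v2] assms by auto
next
  case greater then show ?thesis using psi_mono_lemma[of v2 v1] assms by auto
qed

definition "Rv q p = (p - c) * (1 - F (p / q))"

lemma Rv_cont: "q \<noteq> 0 \<Longrightarrow> continuous_on S (Rv q)"
  unfolding Rv_def[abs_def]
  by (intro continuous_intros continuous_on_compose2[OF F_cont]) auto

lemma max_exists:
  assumes "q > c"
  shows "\<exists>p. \<forall>p'. Rv q p' \<le> Rv q p"
proof -
  have q: "q > 0" using assms c_pos by simp
  have "\<exists>x\<in>{c..q}. \<forall>y\<in>{c..q}. Rv q y \<le> Rv q x"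
    by (rule continuous_attains_sup[OF compact_Icc]) (use assms q Rv_cont in auto)
  then obtain p where p: "p \<in> {c..q}" "\<And>y. y \<in> {c..q} \<Longrightarrow> Rv q y \<le> Rv q p"
    by blast
  have Rc: "Rv q c = 0" by (simp add: Rv_def)
  have "Rv q p' \<le> Rv q p" for p'
  proof -
    consider "p' < c" | "p' \<in> {c..q}" | "p' > q" by force
    then show ?thesis
    proof cases
      case 1
      then have "Rv q p' \<le> 0" unfolding Rv_def
        using F_le1[of "p'/q"] by (intro mult_nonpos_nonneg) auto
      then show ?thesis using p(2)[of c] Rc assms by auto
    next
      case 2 then show ?thesis using p by auto
    next
      case 3
      then have "Rv q p' = 0" unfolding Rv_def using F_high[of "p'/q"] q by auto
      then show ?thesis using p(2)[of c] Rc assms by auto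
    qed
  qed
  then show ?thesis by blast
qed

lemma max_props:
  assumes q: "q > c" and p: "\<And>p'. Rv q p' \<le> Rv q p"
  shows "p / q \<in> {0<..<1} \<and> psi (p / q) = c / q"
proof -
  have q0: "q > 0" using q c_pos by simp
  define p1 where "p1 = (c + q) / 2"
  have "p1 / q < 1" using q q0 by (simp add: p1_def field_simps)
  then have "Rv q p1 > 0" unfolding Rv_def using F_lt1[of "p1/q"] q
    by (intro mult_pos_pos) (auto simp: p1_def)
  then have Rp: "Rv q p > 0" using p[of p1] by simp
  have pc: "p > c"
  proof (rule ccontr)
    assume "\<not> p > c"
    then have "Rv q p \<le> 0" unfolding Rv_def
      using F_le1[of "p/q"] by (intro mult_nonpos_nonneg) auto
    then show False using Rp by simp
  qed
  have pq: "p < q"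
  proof (rule ccontr)
    assume "\<not> p < q"
    then have "Rv q p = 0" unfolding Rv_def using F_high[of "p/q"] q0 by auto
    then show False using Rp by simp
  qed
  define v where "v = p / q"
  have v01: "v \<in> {0<..<1}" using pc pq q0 c_pos by (auto simp: v_def field_simps)
  have Fc: "((\<lambda>p. F (p / q)) has_real_derivative f (p / q) * (1 / q)) (at p)"
    by (rule DERIV_chain2[OF F_dens]) (use v01 in \<open>auto simp: v_def intro!: derivative_eq_intros\<close>)
  have "((\<lambda>p. (p - c) * (1 - F (p / q))) has_real_derivative
      1 * (1 - F (p / q)) + (p - c) * (0 - f (p / q) * (1 / q))) (at p)"
    by (auto intro!: derivative_eq_intros Fc)
  then have "1 * (1 - F (p / q)) + (p - c) * (0 - f (p / q) * (1 / q)) = 0"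
    by (rule DERIV_local_max[of _ _ _ 1]) (use p in \<open>auto simp: Rv_def\<close>)
  then have "G v = (v - c / q) * f v"
    using q0 by (simp add: G_def v_def field_simps)
  then have "r v = v - c / q"
    using f_pos[OF v01] by (simp add: r_def inv_hazard_def G_def)
  then show ?thesis using v01 by (simp add: psi_eq v_def)
qed

abbreviation "W \<equiv> opt_price_bar F c"

lemma W_char:
  assumes q: "q > c"
  shows "W q \<in> {0<..<1} \<and> psi (W q) = c / q"
proof -
  have q0: "q > 0" using q c_pos by simp
  obtain p where p: "\<And>p'. Rv q p' \<le> Rv q p" using max_exists[OF q] by blast
  have "opt_price F c q = p"
    unfolding opt_price_def
  proof (rule the_equality)
    show "\<forall>p'. (p' - c) * (1 - F (p' / q)) \<le> (p - c) * (1 - F (p / q))"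
      using p by (simp add: Rv_def)
    fix p2 assume "\<forall>p'. (p' - c) * (1 - F (p' / q)) \<le> (p2 - c) * (1 - F (p2 / q))"
    then have p2: "\<And>p'. Rv q p' \<le> Rv q p2" by (simp add: Rv_def)
    have "p2 / q = p / q"
      using max_props[OF q p2] max_props[OF q p] psi_inj[of "p2/q" "p/q"] q0 c_pos by auto
    then show "p2 = p" using q0 by (simp add: field_simps)
  qed
  then show ?thesis using max_props[OF q p] by (simp add: opt_price_bar_def)
qed

lemma W_eq:
  assumes q: "q > c" and v: "v \<in> {0<..<1}" "psi v = c / q"
  shows "W q = v"
  using W_char[OF q] v psi_inj[of "W q" v] q c_pos by auto



lemma psi_pos_near:
  assumes x: "x \<in> {0<..<1}" "psi x > 0"
  shows "\<exists>d>0. \<forall>z. \<bar>z - x\<bar> \<le> d \<longrightarrow> z \<in> {0<..<1} \<and> psi z > 0"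
proof -
  have "psi \<midarrow>x\<rightarrow> psi x" using psi_isCont[OF x(1)] by (simp add: isCont_def)
  from LIM_fun_gt_zero[OF this x(2)] obtain d0 where d0: "d0 > 0"
    "\<And>z. z \<noteq> x \<and> \<bar>x - z\<bar> < d0 \<longrightarrow> 0 < psi z" by blast
  define d where "d = min d0 (min x (1 - x)) / 2"
  define m where "m = min d0 (min x (1 - x))"
  have m: "m \<le> d0" "m \<le> x" "m \<le> 1 - x" "m > 0" using d0(1) x(1) unfolding m_def by auto
  have d: "d > 0" "d < d0" "d < x" "d < 1 - x" using m unfolding d_def m_def[symmetric] by linarith+
  show ?thesis
  proof (intro exI[of _ d] conjI allI impI d(1))
    fix z assume z: "\<bar>z - x\<bar> \<le> d"
    show "z \<in> {0<..<1}" using z d by (auto simp: abs_if split: if_splits)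
    show "psi z > 0"
    proof (cases "z = x")
      case True then show ?thesis using x by simp
    next
      case False then show ?thesis using d0(2)[of z] z d by (auto simp: abs_minus_commute)
    qed
  qed
qed

lemma W_deriv:
  assumes q: "q > c"
  shows "(W has_real_derivative - c / (q^2 * (1 - r1 (W q)))) (at q)"
proof -
  have q0: "q > 0" using q c_pos by simp
  define x where "x = W q"
  have x: "x \<in> {0<..<1}" "psi x = c / q" using W_char[OF q] by (auto simp: x_def)
  have px: "psi x > 0" using x q0 c_pos by simp
  have p'x: "1 - r1 x > 0" using psi'_pos[OF x(1) px] .
  obtain d where d: "d > 0" "\<And>z. \<bar>z - x\<bar> \<le> d \<Longrightarrow> z \<in> {0<..<1} \<and> psi z > 0"
    using psi_pos_near[OF x(1) px] by blast
  have inv: "W (c / psi z) = z" if "\<bar>z - x\<bar> \<le> d" for z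
  proof -
    have z: "z \<in> {0<..<1}" "psi z > 0" using d(2)[OF that] by auto
    have "psi z < 1" using psi_lt1[OF z(1)] .
    then have "c / psi z > c" using z c_pos by (simp add: field_simps)
    then show ?thesis using W_eq[of "c / psi z" z] z c_pos by simp
  qed
  have contf: "isCont (\<lambda>z. c / psi z) z" if "\<bar>z - x\<bar> \<le> d" for z
    using d(2)[OF that] by (auto intro!: continuous_intros psi_isCont)
  have "isCont W (c / psi x)"
    by (rule isCont_inverse_function[OF d(1) inv contf])
  then have cont: "isCont W q" using x q0 c_pos by simp
  have der: "((\<lambda>z. c / psi z) has_real_derivative - (c * (1 - r1 x)) / (psi x * psi x)) (at (W q))"
    unfolding x_def[symmetric] using px
    by (auto intro!: derivative_eq_intros psi_deriv x(1))
  have D: "- (c * (1 - r1 x)) / (psi x * psi x) \<noteq> 0" using px p'x c_pos by simp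
  have "(W has_real_derivative inverse (- (c * (1 - r1 x)) / (psi x * psi x))) (at q)"
  proof (rule DERIV_inverse_function[where f="\<lambda>z. c / psi z" and g=W and x=q and a=c and b="q+1", OF der D])
    show "c < q" "q < q + 1" using q by auto
    fix y assume "c < y" "y < q + 1"
    then show "c / psi (W y) = y" using W_char[of y] c_pos by simp
  qed (rule cont)
  moreover have "inverse (- (c * (1 - r1 x)) / (psi x * psi x)) = - c / (q^2 * (1 - r1 x))"
    unfolding x(2) using c_pos q0 p'x by (simp add: field_simps power2_eq_square)
  ultimately show ?thesis by (simp add: x_def)
qed

definition "J v = integral {0..v} G"

lemma G_cont: "continuous_on S G"
  unfolding G_def[abs_def] by (intro continuous_intros continuous_on_subset[OF F_cont]) auto

lemma J_deriv: assumes "v \<in> {0<..<1}" shows "(J has_real_derivative G v) (at v)"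
proof -
  have "(J has_real_derivative G v) (at v within {0..1})"
    unfolding J_def[abs_def] using assms by (intro integral_has_real_derivative G_cont) auto
  then show ?thesis using assms by (simp add: at_within_Icc_at)
qed

lemma J_cont: "continuous_on {0..1} J"
  unfolding J_def[abs_def]
  by (intro indefinite_integral_continuous_1 integrable_continuous_interval G_cont)

lemma TS_formula:
  assumes w0: "w0 \<in> {0<..<1}"
  shows "integral {w0..1} (\<lambda>v. (v * q - c) * f v) = (w0 * q - c) * G w0 + q * (J 1 - J w0)"
proof -
  define Phi where "Phi v = (v * q - c) * (F v - 1) + q * J v" for v
  have "((\<lambda>v. (v * q - c) * f v) has_integral (Phi 1 - Phi w0)) {w0..1}"
  proof (rule fundamental_theorem_of_calculus_interior)
    show "w0 \<le> 1" using w0 by simp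
    show "continuous_on {w0..1} Phi"
      unfolding Phi_def[abs_def] using w0
      by (intro continuous_intros continuous_on_subset[OF F_cont] continuous_on_subset[OF J_cont]) auto
    fix x assume x: "x \<in> {w0<..<1}"
    then have x01: "x \<in> {0<..<1}" using w0 by auto
    have "(Phi has_real_derivative (q * (F x - 1) + (x * q - c) * f x + q * G x)) (at x)"
      unfolding Phi_def[abs_def] by (auto intro!: derivative_eq_intros F_dens J_deriv x01)
    moreover have "q * (F x - 1) + (x * q - c) * f x + q * G x = (x * q - c) * f x"
      by (simp add: G_def algebra_simps)
    ultimately show "(Phi has_vector_derivative (x * q - c) * f x) (at x)"
      by (simp add: has_real_derivative_iff_has_vector_derivative)
  qed
  then have "integral {w0..1} (\<lambda>v. (v * q - c) * f v) = Phi 1 - Phi w0" by (rule integral_unique)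
  then show ?thesis using F_high[of 1] by (simp add: Phi_def G_def algebra_simps)
qed

definition "K v = v * G v + (J 1 - J v) + G v * psi v / (1 - r1 v)"

lemma TS_deriv:
  assumes q: "q > c"
  shows "(total_surplus F f c has_real_derivative K (W q)) (at q)"
proof -
  have q0: "q > 0" using q c_pos by simp
  define w where "w = W q"
  have w: "w \<in> {0<..<1}" "psi w = c / q" using W_char[OF q] by (auto simp: w_def)
  have pw: "psi w > 0" using w q0 c_pos by simp
  have p'w: "1 - r1 w > 0" using psi'_pos[OF w(1) pw] .
  define w' where "w' = - c / (q^2 * (1 - r1 w))"
  have dW: "(W has_real_derivative w') (at q)" using W_deriv[OF q] by (simp add: w'_def w_def)
  have dG: "((\<lambda>q. G (W q)) has_real_derivative (- f w) * w') (at q)"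
    by (rule DERIV_chain2[OF _ dW]) (use G_deriv w in \<open>simp add: w_def\<close>)
  have dJ: "((\<lambda>q. J (W q)) has_real_derivative G w * w') (at q)"
    by (rule DERIV_chain2[OF _ dW]) (use J_deriv w in \<open>simp add: w_def\<close>)
  define TSf where "TSf q = (W q * q - c) * G (W q) + q * (J 1 - J (W q))" for q
  have "(TSf has_real_derivative
      (w' * q + w * 1) * G w + (w * q - c) * ((- f w) * w') + (1 * (J 1 - J w) + q * (0 - G w * w'))) (at q)"
    unfolding TSf_def[abs_def] w_def using dW dG dJ
    by (auto intro!: derivative_eq_intros simp: w_def)
  moreover have "(w' * q + w * 1) * G w + (w * q - c) * ((- f w) * w') + (1 * (J 1 - J w) + q * (0 - G w * w'))
      = K w"
  proof -
    have Gw: "G w = f w * r w" using G_eq[OF w(1)] .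
    have rw: "r w = w - c / q" using w(2) by (simp add: psi_eq)
    have e1: "(w' * q + w * 1) * G w + (w * q - c) * ((- f w) * w') + (1 * (J 1 - J w) + q * (0 - G w * w'))
      = w * G w + (J 1 - J w) + (- (w * q - c) * f w * w')" by (simp add: algebra_simps)
    have e2: "- (w * q - c) * f w * w' = G w * (c / q) / (1 - r1 w)"
    proof -
      have "- (w * q - c) * f w * w' = (w * q - c) * f w * c / (q^2 * (1 - r1 w))"
        using q0 p'w by (simp add: w'_def field_simps)
      also have "\<dots> = f w * (w - c / q) * (c / q) / (1 - r1 w)"
        using q0 p'w by (simp add: field_simps power2_eq_square)
      finally show ?thesis unfolding Gw rw .
    qed
    show ?thesis unfolding e1 e2 K_def w(2) by simp
  qed
  moreover have "TSf x = total_surplus F f c x" if "x \<in> {c<..}" for x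
    using TS_formula[of "W x" x] W_char[of x] that
    by (simp add: TSf_def total_surplus_def)
  ultimately show ?thesis
    using has_field_derivative_transform_within_open[of TSf _ q "{c<..}"] q
    by (simp add: w_def)
qed

lemma K_alg:
  fixes P fv rv p v r2 :: real
  assumes "P > 0" "v = p + rv"
  shows "(1 * (fv * rv) + v * (- fv)) + (0 - fv * rv) +
     (((- fv) * p + fv * rv * P) * P - fv * rv * p * (0 - r2)) / (P * P)
     = - (fv * p / P^2) * (P^2 + P - rv * r2)"
  using assms(1) unfolding assms(2) by (simp add: field_simps power2_eq_square)

lemma neg_mult_le0: "(A::real) > 0 \<Longrightarrow> (- A * B \<le> 0) = (0 \<le> B)"
  by (auto simp: zero_le_mult_iff mult_le_0_iff)

lemma K_deriv:
  assumes v: "v \<in> {0<..<1}" and pv: "psi v > 0"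
  shows "(K has_real_derivative
     - (f v * psi v / (1 - r1 v)^2) * ((1 - r1 v)^2 + (1 - r1 v) - r v * r2 v)) (at v)"
proof -
  have p'v: "1 - r1 v > 0" using psi'_pos[OF v pv] .
  have "(K has_real_derivative
     (1 * G v + v * (- f v)) + (0 - G v) +
     (((- f v) * psi v + G v * (1 - r1 v)) * (1 - r1 v) - G v * psi v * (0 - r2 v)) / ((1 - r1 v) * (1 - r1 v))) (at v)"
    unfolding K_def[abs_def] using p'v
    by (auto intro!: derivative_eq_intros G_deriv J_deriv psi_deriv r1_deriv v simp: power2_eq_square)
  moreover have "(1 * G v + v * (- f v)) + (0 - G v) +
     (((- f v) * psi v + G v * (1 - r1 v)) * (1 - r1 v) - G v * psi v * (0 - r2 v)) / ((1 - r1 v) * (1 - r1 v))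
     = - (f v * psi v / (1 - r1 v)^2) * ((1 - r1 v)^2 + (1 - r1 v) - r v * r2 v)"
    using K_alg[of "1 - r1 v" v "psi v" "r v" "f v" "r2 v"] p'v psi_eq[of v] G_eq[OF v] by simp
  ultimately show ?thesis by simp
qed

lemma K'_sign:
  assumes v: "v \<in> {0<..<1}" and pv: "psi v > 0"
  shows "- (f v * psi v / (1 - r1 v)^2) * ((1 - r1 v)^2 + (1 - r1 v) - r v * r2 v) \<le> 0
     \<longleftrightarrow> r v * r2 v + r1 v \<le> 1 + (1 - r1 v)^2"
proof -
  have p'v: "1 - r1 v > 0" using psi'_pos[OF v pv] .
  have pos: "f v * psi v / (1 - r1 v)^2 > 0" using f_pos[OF v] pv p'v by simp
  have "- (f v * psi v / (1 - r1 v)^2) * ((1 - r1 v)^2 + (1 - r1 v) - r v * r2 v) \<le> 0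
     \<longleftrightarrow> 0 \<le> (1 - r1 v)^2 + (1 - r1 v) - r v * r2 v"
    by (rule neg_mult_le0[OF pos])
  then show ?thesis by linarith
qed

lemma W_anti:
  assumes "c < q1" "q1 \<le> q2"
  shows "W q2 \<le> W q1"
proof (rule ccontr)
  assume "\<not> W q2 \<le> W q1"
  then have lt: "W q1 < W q2" by simp
  have c1: "W q1 \<in> {0<..<1}" "psi (W q1) = c / q1" using W_char[of q1] assms by auto
  have c2: "W q2 \<in> {0<..<1}" "psi (W q2) = c / q2" using W_char[of q2] assms by auto
  have "psi (W q1) > 0" using c1(2) assms c_pos by simp
  then have "c / q1 < c / q2" using psi_mono_lemma[OF lt] c1 c2 by auto
  moreover have "c / q2 \<le> c / q1"
    using divide_left_mono[OF assms(2), of c] assms c_pos by simp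
  ultimately show False by simp
qed

theorem main:
  assumes ql: "c < q_l" and qlh: "q_l < q_h"
  shows "convex_on {q_l..q_h} (total_surplus F f c) \<longleftrightarrow>
    (\<forall>v \<in> {W q_h <..< W q_l}. r v * r2 v + r1 v \<le> 1 + (1 - r1 v)^2)"
proof -
  define wl where "wl = W q_l"
  define wh where "wh = W q_h"
  have ql0: "q_l > 0" using ql c_pos by simp
  have cl: "wl \<in> {0<..<1}" "psi wl = c / q_l" using W_char[of q_l] ql by (auto simp: wl_def)
  have ch: "wh \<in> {0<..<1}" "psi wh = c / q_h" using W_char[of q_h] ql qlh by (auto simp: wh_def)
  have pwh: "psi wh > 0" using ch ql0 qlh c_pos by simp
  have psi_rng: "v \<in> {0<..<1} \<and> c / q_h \<le> psi v \<and> psi v \<le> c / q_l \<and> psi v > 0" if v: "v \<in> {wh..wl}" for v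
  proof -
    have v01: "v \<in> {0<..<1}" using v cl ch by auto
    have 1: "c / q_h \<le> psi v"
    proof (cases "v = wh")
      case True then show ?thesis using ch by simp
    next
      case False
      then show ?thesis using psi_mono_lemma[of wh v] v pwh ch v01 by auto
    qed
    have pv: "psi v > 0" using 1 c_pos ql0 qlh by (smt (verit) divide_pos_pos)
    have 2: "psi v \<le> c / q_l"
    proof (cases "v = wl")
      case True then show ?thesis using cl by simp
    next
      case False
      then show ?thesis using psi_mono_lemma[of v wl] v pv cl v01 by auto
    qed
    show ?thesis using v01 1 2 pv by simp
  qed
  have psi_rng_strict: "c / q_h < psi v \<and> psi v < c / q_l" if v: "v \<in> {wh<..<wl}" for v
  proof -
    have "v \<in> {0<..<1}" "psi v > 0" using psi_rng[of v] v by auto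
    then show ?thesis using psi_mono_lemma[of wh v] psi_mono_lemma[of v wl] v pwh ch cl by auto
  qed
  have Qinv: "c / psi v \<in> {q_l..q_h} \<and> W (c / psi v) = v" if v: "v \<in> {wh..wl}" for v
  proof -
    have pr: "v \<in> {0<..<1}" "c / q_h \<le> psi v" "psi v \<le> c / q_l" "psi v > 0" using psi_rng[OF v] by auto
    have "q_l \<le> c / psi v" using pr(3,4) ql0 c_pos by (simp add: field_simps)
    moreover have "c / psi v \<le> q_h" using pr(2,4) ql0 qlh c_pos by (simp add: field_simps)
    moreover have "W (c / psi v) = v"
      using W_eq[of "c / psi v" v] pr ql calculation(1) c_pos by simp
    ultimately show ?thesis by simp
  qed
  have Qinv_strict: "c / psi v \<in> {q_l<..<q_h}" if v: "v \<in> {wh<..<wl}" for v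
  proof -
    have pr: "c / q_h < psi v" "psi v < c / q_l" "psi v > 0" using psi_rng_strict[OF v] psi_rng[of v] v by auto
    have "q_l < c / psi v" using pr(2,3) ql0 c_pos by (simp add: field_simps)
    moreover have "c / psi v < q_h" using pr(1,3) ql0 qlh c_pos by (simp add: field_simps)
    ultimately show ?thesis by simp
  qed
  have Kd: "(K has_real_derivative
     - (f v * psi v / (1 - r1 v)^2) * ((1 - r1 v)^2 + (1 - r1 v) - r v * r2 v)) (at v)"
    if "v \<in> {wh..wl}" for v
    using K_deriv[of v] psi_rng[OF that] by auto
  have Wrng: "W q \<in> {wh..wl}" if "q \<in> {q_l..q_h}" for q
    using W_anti[of q_l q] W_anti[of q q_h] that ql unfolding wl_def wh_def by auto
  show ?thesis
  proof
    assume cond: "\<forall>v \<in> {W q_h <..< W q_l}. r v * r2 v + r1 v \<le> 1 + (1 - r1 v)^2"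
    have Kanti: "K y \<le> K x" if "x \<le> y" "x \<in> {wh..wl}" "y \<in> {wh..wl}" for x y
    proof (rule DERIV_nonpos_imp_decreasing_open[OF that(1)])
      fix z assume z: "x < z" "z < y"
      then have zr: "z \<in> {wh..wl}" "z \<in> {wh<..<wl}" using that by auto
      have "- (f z * psi z / (1 - r1 z)^2) * ((1 - r1 z)^2 + (1 - r1 z) - r z * r2 z) \<le> 0"
        using K'_sign[of z] psi_rng[OF zr(1)] cond zr(2) unfolding wl_def wh_def by auto
      then show "\<exists>y. (K has_real_derivative y) (at z) \<and> y \<le> 0" using Kd[OF zr(1)] by blast
    next
      show "continuous_on {x..y} K"
        using that by (intro continuous_at_imp_continuous_on ballI DERIV_isCont[OF Kd]) auto
    qed
    show "convex_on {q_l..q_h} (total_surplus F f c)"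
    proof (rule convex_on_realI[where f' = "\<lambda>q. K (W q)"])
      show "connected {q_l..q_h}" by simp
      fix x assume "x \<in> {q_l..q_h}"
      then show "(total_surplus F f c has_real_derivative K (W x)) (at x)"
        using TS_deriv[of x] ql by auto
    next
      fix x y assume xy: "x \<in> {q_l..q_h}" "y \<in> {q_l..q_h}" "x \<le> y"
      then show "K (W x) \<le> K (W y)"
        using Kanti[of "W y" "W x"] W_anti[of x y] Wrng ql by auto
    qed
  next
    assume cvx: "convex_on {q_l..q_h} (total_surplus F f c)"
    show "\<forall>v \<in> {W q_h <..< W q_l}. r v * r2 v + r1 v \<le> 1 + (1 - r1 v)^2"
    proof
      fix v assume v0: "v \<in> {W q_h <..< W q_l}"
      then have v: "v \<in> {wh<..<wl}" by (simp add: wl_def wh_def)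
      then have vc: "v \<in> {wh..wl}" by auto
      have pr: "v \<in> {0<..<1}" "psi v > 0" using psi_rng[OF vc] by auto
      have "- (f v * psi v / (1 - r1 v)^2) * ((1 - r1 v)^2 + (1 - r1 v) - r v * r2 v) \<le> 0"
      proof (rule ccontr)
        assume "\<not> ?thesis"
        then obtain d where d: "d > 0" "\<And>h. h > 0 \<Longrightarrow> h < d \<Longrightarrow> K v < K (v + h)"
          using DERIV_pos_inc_right[OF Kd[OF vc]] by force
        define h where "h = min d (wl - v) / 2"
        have h: "h > 0" "h < d" "h < wl - v" using d(1) v unfolding h_def by (auto simp: min_def)
        define y where "y = v + h"
        have y: "y \<in> {wh<..<wl}" "v < y" using h v by (auto simp: y_def)
        have Kvy: "K v < K y" using d(2)[OF h(1,2)] by (simp add: y_def)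
        define q1 where "q1 = c / psi v"
        define q2 where "q2 = c / psi y"
        have q1: "q1 \<in> {q_l<..<q_h}" "W q1 = v" using Qinv_strict[OF v] Qinv[OF vc] by (auto simp: q1_def)
        have yc: "y \<in> {wh..wl}" using y by auto
        have q2: "q2 \<in> {q_l<..<q_h}" "W q2 = y" using Qinv_strict[OF y(1)] Qinv[OF yc] by (auto simp: q2_def)
        have "psi v < psi y" using psi_mono_lemma[of v y] y pr psi_rng[OF yc] by auto
        then have q21: "q2 < q1" unfolding q1_def q2_def
          using divide_strict_left_mono[OF \<open>psi v < psi y\<close> c_pos] pr(2) \<open>psi v < psi y\<close> by simp
        have int: "interior {q_l..q_h} = {q_l<..<q_h}" by simp
        have t1: "total_surplus F f c q2 - total_surplus F f c q1 \<ge> K v * (q2 - q1)"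
          using convex_on_imp_above_tangent[OF cvx connected_Icc, of q1 q2 "K v"] q1 q2 int
            has_field_derivative_at_within[OF TS_deriv[of q1]] ql by auto
        have t2: "total_surplus F f c q1 - total_surplus F f c q2 \<ge> K y * (q1 - q2)"
          using convex_on_imp_above_tangent[OF cvx connected_Icc, of q2 q1 "K y"] q1 q2 int
            has_field_derivative_at_within[OF TS_deriv[of q2]] ql by auto
        have "(K y - K v) * (q1 - q2) \<le> 0" using t1 t2 by (simp add: algebra_simps)
        then have "K y \<le> K v" using q21 by (simp add: mult_le_0_iff)
        then show False using Kvy by simp
      qed
      then show "r v * r2 v + r1 v \<le> 1 + (1 - r1 v)^2" using K'_sign[OF pr] by simp
    qed
  qed
qed

end

theorem lemma12:
  fixes F f :: "real \<Rightarrow> real" and q_l q_h c :: real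
  assumes "0 < q_l" and "q_l < q_h" and "0 < c" and "c < q_l"
    and F_cont: "continuous_on UNIV F"
    and F_low: "\<And>v. v \<le> 0 \<Longrightarrow> F v = 0"
    and F_high: "\<And>v. 1 \<le> v \<Longrightarrow> F v = 1"
    and F_dens: "\<And>v. v \<in> {0<..<1} \<Longrightarrow> (F has_real_derivative f v) (at v)"
    and f_pos: "\<And>v. v \<in> {0<..<1} \<Longrightarrow> f v > 0"
    and f_C2: "\<exists>f1 f2. (\<forall>v\<in>{0<..<1}. (f has_real_derivative f1 v) (at v)
                                   \<and> (f1 has_real_derivative f2 v) (at v))
                     \<and> continuous_on {0<..<1} f2"
    and psi_mono: "\<And>v. v \<in> {0<..<1} \<Longrightarrow> virt_val F f v > 0 \<Longrightarrow> deriv (virt_val F f) v > 0"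
  shows "convex_on {q_l..q_h} (total_surplus F f c) \<longleftrightarrow>
    (\<forall>v \<in> {opt_price_bar F c q_h <..< opt_price_bar F c q_l}.
       inv_hazard F f v * deriv (deriv (inv_hazard F f)) v + deriv (inv_hazard F f) v
         \<le> 1 + (1 - deriv (inv_hazard F f) v)^2)"
proof -
  obtain f1 f2 where ff: "\<forall>v\<in>{0<..<1}. (f has_real_derivative f1 v) (at v) \<and> (f1 has_real_derivative f2 v) (at v)"
    using f_C2 by blast
  interpret T: tsloc F f f1 f2 c
    using assms ff by unfold_locales auto
  have m: "convex_on {q_l..q_h} (total_surplus F f c) \<longleftrightarrow>
    (\<forall>v \<in> {T.W q_h <..< T.W q_l}. T.r v * T.r2 v + T.r1 v \<le> 1 + (1 - T.r1 v)^2)"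
    using T.main[of q_l q_h] assms by simp
  have sub: "v \<in> {0<..<1}" if "v \<in> {T.W q_h <..< T.W q_l}" for v
    using T.W_char[of q_l] T.W_char[of q_h] assms that by auto
  have eq: "(inv_hazard F f v * deriv (deriv (inv_hazard F f)) v + deriv (inv_hazard F f) v
         \<le> 1 + (1 - deriv (inv_hazard F f) v)^2) \<longleftrightarrow> (T.r v * T.r2 v + T.r1 v \<le> 1 + (1 - T.r1 v)^2)"
    if "v \<in> {T.W q_h <..< T.W q_l}" for v
    using T.deriv_r[OF sub[OF that]] T.deriv_deriv_r[OF sub[OF that]] unfolding T.r_def by simp
  show ?thesis unfolding m using eq by auto
qed

end
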